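(* Let $f:\mathbb{R}^n\to\mathbb{R}$ be twice differentiable with $\mu I\preceq \nabla^2 f(x)\preceq L I$ for all $x$ (where $0<\mu\le L$), and strongly self-concordant with constant $M\ge 0$. Let $\kappa=L/\mu$. Run the SR1 method with correction strategy: choose $x_0\in\mathbb{R}^n$, set $G_0=L\cdot I$, $r_{-1}=0$, and for $k=0,1,2,\dots$ set $x_{k+1}=x_k-G_k^{-1}\nabla f(x_k)$, $u_k=x_{k+1}-x_k$, $r_k=\|u_k\|_{x_k}$, $\widetilde G_k=\left(1+\frac{Mr_{k-1}}{2}\right)\left(1+\frac{Mr_k}{2}\right)G_k$, $J_k=\int_0^1\nabla^2 f(x_k+tu_k)\,dt$, and $G_{k+1}=\mathrm{SR1}(J_k,\widetilde G_k,u_k)$. Set also $J_{-1}=\nabla^2 f(x_0)$, $\lambda_k=\lambda_f(x_k)$, and $\xi_k=e^{M\sum_{i=0}^{k-1}(r_{i-1}+r_i)}$ (so $\xi_0=1$). Suppose $M\lambda_0\le\frac{\ln(3/2)}{4\kappa}$. Then for all $k\ge 0$: $$J_{k-1}\preceq G_k\preceq \xi_k\kappa J_{k-1},\qquad e^{Mr_{k-1}/2}\lambda_k\le\left(1-\frac{1}{2\kappa}\right)^k\lambda_0,\qquad r_k\le\left(1-\frac{1}{2\kappa}\right)^k\lambda_0,\qquad \xi_k\le\frac32.$$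
   Context: $f$ is strongly self-concordant with constant $M\ge0$ if $\nabla^2 f(y)-\nabla^2 f(x)\preceq M\|y-x\|_z\nabla^2 f(w)$ for all $x,y,z,w\in\mathbb{R}^n$, where $\|u\|_x=\sqrt{u^\top\nabla^2 f(x)u}$. $\lambda_f(x)=\langle\nabla f(x),[\nabla^2 f(x)]^{-1}\nabla f(x)\rangle^{1/2}$. For symmetric positive definite $A,G$ and $u\neq 0$, $\mathrm{SR1}(A,G,u)=G$ if $(G-A)u=0$, and otherwise $\mathrm{SR1}(A,G,u)=G-\frac{(G-A)uu^\top(G-A)}{u^\top(G-A)u}$. *)

theory Defs
  imports "HOL-Analysis.Analysis"
begin

definition loewner_le :: "real^'n^'n \<Rightarrow> real^'n^'n \<Rightarrow> bool" where
  "loewner_le A B \<longleftrightarrow> (\<forall>v::real^'n. 0 \<le> v \<bullet> ((B - A) *v v))"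

definition outer :: "real^'n \<Rightarrow> real^'n \<Rightarrow> real^'n^'n" where
  "outer a b = (\<chi> i j. a $ i * b $ j)"

definition loc_norm :: "(real^'n \<Rightarrow> real^'n^'n) \<Rightarrow> real^'n \<Rightarrow> real^'n \<Rightarrow> real" where
  "loc_norm hess x u = sqrt (u \<bullet> (hess x *v u))"

definition newton_decr :: "(real^'n \<Rightarrow> real^'n) \<Rightarrow> (real^'n \<Rightarrow> real^'n^'n) \<Rightarrow> real^'n \<Rightarrow> real" where
  "newton_decr grad hess x = sqrt (grad x \<bullet> (matrix_inv (hess x) *v grad x))"

definition strongly_self_concordant :: "(real^'n \<Rightarrow> real^'n^'n) \<Rightarrow> real \<Rightarrow> bool" where
  "strongly_self_concordant hess M \<longleftrightarrow>
     (\<forall>x y z w. loewner_le (hess y - hess x) (((M * loc_norm hess z (y - x)) *\<^sub>R hess w)))"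

definition SR1 :: "real^'n^'n \<Rightarrow> real^'n^'n \<Rightarrow> real^'n \<Rightarrow> real^'n^'n" where
  "SR1 A G u = (if (G - A) *v u = 0 then G
     else G - (1 / (u \<bullet> ((G - A) *v u))) *\<^sub>R outer ((G - A) *v u) ((G - A) *v u))"

definition avg_hess :: "(real^'n \<Rightarrow> real^'n^'n) \<Rightarrow> real^'n \<Rightarrow> real^'n \<Rightarrow> real^'n^'n" where
  "avg_hess hess x u = integral {0..1} (\<lambda>t. hess (x + t *\<^sub>R u))"

end

theory Submission
  imports Defs
begin

lemma mv_diff: "((A::real^'n^'n) - B) *v v = A *v v - B *v v"
  by (simp add: matrix_vector_mult_def vec_eq_iff algebra_simps sum_subtractf)
lemma mv_add: "((A::real^'n^'n) + B) *v v = A *v v + B *v v"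
  by (simp add: matrix_vector_mult_def vec_eq_iff algebra_simps sum.distrib)
lemma mv_scale: "((c::real) *\<^sub>R (A::real^'n^'n)) *v v = c *\<^sub>R (A *v v)"
  by (simp add: matrix_vector_mult_def vec_eq_iff algebra_simps sum_distrib_left)
lemma mv_vadd: "(A::real^'n^'n) *v (v + w) = A *v v + A *v w"
  by (simp add: matrix_vector_right_distrib)
lemma mv_vscale: "(A::real^'n^'n) *v (c *\<^sub>R v) = c *\<^sub>R (A *v v)"
  by (simp add: matrix_vector_mult_def vec_eq_iff algebra_simps sum_distrib_left)
lemma mv_vdiff: "(A::real^'n^'n) *v (v - w) = A *v v - A *v w"
  by (simp add: matrix_vector_mult_def vec_eq_iff algebra_simps sum_subtractf)
lemma mv_vneg: "(A::real^'n^'n) *v (- v) = - (A *v v)"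
  by (simp add: matrix_vector_mult_def vec_eq_iff algebra_simps sum_negf)
lemma mv_outer: "outer a b *v v = (b \<bullet> v) *\<^sub>R a"
  by (simp add: outer_def matrix_vector_mult_def vec_eq_iff inner_vec_def sum_distrib_left algebra_simps)

definition qf :: "real^'n^'n \<Rightarrow> real^'n \<Rightarrow> real" where "qf A v = v \<bullet> (A *v v)"
definition symm :: "real^'n^'n \<Rightarrow> bool" where "symm A \<longleftrightarrow> (\<forall>v w. v \<bullet> (A *v w) = w \<bullet> (A *v v))"
definition psd :: "real^'n^'n \<Rightarrow> bool" where "psd A \<longleftrightarrow> (\<forall>v. 0 \<le> qf A v)"

lemma loewner_qf: "loewner_le A B \<longleftrightarrow> (\<forall>v. qf A v \<le> qf B v)"
  by (simp add: loewner_le_def qf_def mv_diff inner_diff_right)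

lemma qf_scale: "qf ((c::real) *\<^sub>R A) v = c * qf A v"
  by (simp add: qf_def mv_scale)
lemma qf_diff: "qf (A - B) v = qf A v - qf B v"
  by (simp add: qf_def mv_diff inner_diff_right)
lemma qf_vscale: "qf A (c *\<^sub>R v) = c^2 * qf A v"
  by (simp add: qf_def mv_vscale power2_eq_square)
lemma qf_vadd: "symm A \<Longrightarrow> qf A (v + w) = qf A v + 2 * (v \<bullet> (A *v w)) + qf A w"
  unfolding qf_def symm_def by (simp add: mv_vadd inner_add_left inner_add_right)
lemma qf_vdiff: "symm A \<Longrightarrow> qf A (v - w) = qf A v - 2 * (v \<bullet> (A *v w)) + qf A w"
  unfolding qf_def symm_def by (simp add: mv_vdiff inner_diff_left inner_diff_right)
lemma symm_swap: "symm A \<Longrightarrow> v \<bullet> (A *v w) = w \<bullet> (A *v v)"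
  unfolding symm_def by blast
lemma symm_swap2: "symm A \<Longrightarrow> (A *v v) \<bullet> w = (A *v w) \<bullet> v"
  unfolding symm_def by (metis inner_commute)

lemma symm_diff: "symm A \<Longrightarrow> symm B \<Longrightarrow> symm (A - B)"
  unfolding symm_def by (simp add: mv_diff inner_diff_right)
lemma symm_add: "symm A \<Longrightarrow> symm B \<Longrightarrow> symm (A + B)"
  unfolding symm_def by (simp add: mv_add inner_add_right)
lemma symm_scale: "symm A \<Longrightarrow> symm (c *\<^sub>R A)"
  unfolding symm_def by (simp add: mv_scale)
lemma symm_outer: "symm (outer w w)"
  unfolding symm_def by (simp add: mv_outer inner_commute)
lemma symm_mat1: "symm (mat 1)"
  unfolding symm_def by (simp add: inner_commute)

lemma CS_psd:
  assumes S: "symm D" and P: "psd D"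
  shows "(v \<bullet> (D *v w))^2 \<le> qf D v * qf D w"
proof -
  define b where "b = v \<bullet> (D *v w)"
  have q: "0 \<le> qf D v + 2 * t * b + t^2 * qf D w" for t
  proof -
    have "0 \<le> qf D (v + t *\<^sub>R w)" using P psd_def by blast
    also have "\<dots> = qf D v + 2 * t * b + t^2 * qf D w"
      using qf_vadd[OF S, of v "t *\<^sub>R w"] by (simp add: qf_vscale b_def mv_vscale)
    finally show ?thesis .
  qed
  show ?thesis
  proof (cases "qf D w = 0")
    case True
    have "b = 0"
    proof (rule ccontr)
      assume "b \<noteq> 0"
      have "0 \<le> qf D v + 2 * (- (qf D v + 1) / (2 * b)) * b"
        using q[of "- (qf D v + 1) / (2 * b)"] True by simp
      also have "\<dots> = -1" using \<open>b \<noteq> 0\<close> by (simp add: field_simps)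
      finally show False by simp
    qed
    then show ?thesis using True by (simp add: b_def)
  next
    case False
    have w0: "0 < qf D w" using False P psd_def by (metis order_le_less)
    have "0 \<le> qf D v + 2 * (- b / qf D w) * b + (- b / qf D w)^2 * qf D w"
      using q by blast
    also have "\<dots> = qf D v - b^2 / qf D w"
      using w0 by (simp add: field_simps power2_eq_square)
    finally have "b^2 / qf D w \<le> qf D v" by simp
    then show ?thesis using w0 by (simp add: b_def field_simps)
  qed
qed

lemma inv_props:
  assumes "invertible (A::real^'n^'n)"
  shows "A ** matrix_inv A = mat 1" "matrix_inv A ** A = mat 1"
proof -
  have "\<exists>A'. A ** A' = mat 1 \<and> A' ** A = mat 1" using assms invertible_def by blast
  then have "A ** matrix_inv A = mat 1 \<and> matrix_inv A ** A = mat 1"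
    unfolding matrix_inv_def by (rule someI_ex)
  then show "A ** matrix_inv A = mat 1" "matrix_inv A ** A = mat 1" by auto
qed

lemma inv_mv1: "invertible (A::real^'n^'n) \<Longrightarrow> A *v (matrix_inv A *v v) = v"
  by (simp add: matrix_vector_mul_assoc inv_props)
lemma inv_mv2: "invertible (A::real^'n^'n) \<Longrightarrow> matrix_inv A *v (A *v v) = v"
  by (simp add: matrix_vector_mul_assoc inv_props)

lemma pd_invertible:
  assumes "\<And>v. v \<noteq> 0 \<Longrightarrow> 0 < qf (A::real^'n^'n) v"
  shows "invertible A"
proof -
  have "inj ((*v) A)"
  proof (rule injI)
    fix v w assume "A *v v = A *v w"
    then have "A *v (v - w) = 0" by (simp add: mv_vdiff)
    then have "qf A (v - w) = 0" by (simp add: qf_def)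
    then show "v = w" using assms[of "v - w"] by (metis less_irrefl right_minus_eq)
  qed
  then obtain B where "B ** A = mat 1" using matrix_left_invertible_injective by blast
  then have "A ** B = mat 1" using matrix_left_right_inverse by blast
  then show ?thesis using \<open>B ** A = mat 1\<close> invertible_def by blast
qed

lemma symm_inv:
  assumes S: "symm A" and I: "invertible (A::real^'n^'n)"
  shows "symm (matrix_inv A)"
  unfolding symm_def
proof (intro allI)
  fix v w
  let ?B = "matrix_inv A"
  have "v \<bullet> (?B *v w) = (A *v (?B *v v)) \<bullet> (?B *v w)" using inv_mv1[OF I] by simp
  also have "\<dots> = (A *v (?B *v w)) \<bullet> (?B *v v)" using symm_swap2[OF S] by simp
  also have "\<dots> = w \<bullet> (?B *v v)" using inv_mv1[OF I] by simp
  finally show "v \<bullet> (?B *v w) = w \<bullet> (?B *v v)" .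
qed

lemma inv_qf_eq: "invertible (A::real^'n^'n) \<Longrightarrow> qf A (matrix_inv A *v g) = qf (matrix_inv A) g"
  by (simp add: qf_def inv_mv1 inner_commute)

lemma inv_antitone:
  assumes SA: "symm A" and SB: "symm B" and IA: "invertible (A::real^'n^'n)" and IB: "invertible B"
    and PA: "psd A" and le: "\<And>v. c * qf A v \<le> qf B v" and c: "0 < c"
  shows "c * qf (matrix_inv B) x \<le> qf (matrix_inv A) x"
proof -
  define y where "y = matrix_inv B *v x"
  define z where "z = matrix_inv A *v x"
  have By: "B *v y = x" using inv_mv1[OF IB] y_def by simp
  have Az: "A *v z = x" using inv_mv1[OF IA] z_def by simp
  have e1: "qf (matrix_inv B) x = x \<bullet> y" by (simp add: qf_def y_def)
  have e2: "qf (matrix_inv A) x = x \<bullet> z" by (simp add: qf_def z_def)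
  have "0 \<le> qf A (z - c *\<^sub>R y)" using PA psd_def by blast
  also have "\<dots> = qf A z - 2 * (z \<bullet> (A *v (c *\<^sub>R y))) + qf A (c *\<^sub>R y)"
    by (rule qf_vdiff[OF SA])
  also have "\<dots> = x \<bullet> z - 2 * c * (x \<bullet> y) + c^2 * qf A y"
  proof -
    have "z \<bullet> (A *v (c *\<^sub>R y)) = c * (y \<bullet> (A *v z))"
      using symm_swap[OF SA, of z y] by (simp add: mv_vscale)
    then show ?thesis by (simp add: qf_vscale qf_def Az inner_commute mv_vscale power2_eq_square)
  qed
  also have "\<dots> \<le> x \<bullet> z - 2 * c * (x \<bullet> y) + c * qf B y"
  proof -
    have "c * (c * qf A y) \<le> c * qf B y" using le[of y] c by (simp add: mult_left_mono)
    then show ?thesis by (simp add: power2_eq_square mult.assoc)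
  qed
  also have "qf B y = x \<bullet> y" by (simp add: qf_def By inner_commute)
  finally show ?thesis using e1 e2 by simp
qed

lemma SR1_props:
  assumes SA: "symm A" and SG: "symm G"
    and lo: "\<And>v. qf A v \<le> qf G v" and hi: "\<And>v. qf G v \<le> eta * qf A v"
  shows "symm (SR1 A G u) \<and> (\<forall>v. qf A v \<le> qf (SR1 A G u) v \<and> qf (SR1 A G u) v \<le> eta * qf A v)"
proof (cases "(G - A) *v u = 0")
  case True
  then show ?thesis using SG lo hi by (simp add: SR1_def)
next
  case False
  define D where "D = G - A"
  define w where "w = D *v u"
  define s where "s = u \<bullet> w"
  have SD: "symm D" using SA SG symm_diff D_def by blast
  have PD: "psd D" using lo by (simp add: psd_def D_def qf_diff)
  have w0: "w \<noteq> 0" using False D_def w_def by simp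
  have s_eq: "s = qf D u" by (simp add: s_def w_def qf_def)
  have spos: "0 < s"
  proof (rule ccontr)
    assume "\<not> 0 < s"
    then have "qf D u = 0" using PD psd_def s_eq by (metis linorder_not_le order_antisym)
    then have "(w \<bullet> (D *v u))^2 \<le> 0" using CS_psd[OF SD PD, of w u] by simp
    then have "w \<bullet> w = 0" by (simp add: w_def)
    then show False using w0 by simp
  qed
  have SR: "SR1 A G u = G - (1 / s) *\<^sub>R outer w w"
    using False by (simp add: SR1_def D_def w_def s_def)
  have qfSR: "qf (SR1 A G u) v = qf G v - (w \<bullet> v)^2 / s" for v
  proof -
    have "qf (outer w w) v = (w \<bullet> v)^2" by (simp add: qf_def mv_outer power2_eq_square inner_commute)
    then show ?thesis by (simp add: SR qf_diff qf_scale)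
  qed
  have "symm (SR1 A G u)" unfolding SR by (intro symm_diff SG symm_scale symm_outer)
  moreover have "qf A v \<le> qf (SR1 A G u) v" for v
  proof -
    have "(w \<bullet> v)^2 \<le> qf D v * s"
      using CS_psd[OF SD PD, of v u] s_eq by (simp add: w_def inner_commute)
    then have "(w \<bullet> v)^2 / s \<le> qf D v" using spos by (simp add: divide_le_eq)
    then show ?thesis by (simp add: qfSR D_def qf_diff)
  qed
  moreover have "qf (SR1 A G u) v \<le> eta * qf A v" for v
  proof -
    have "0 \<le> (w \<bullet> v)^2 / s" using spos by simp
    then show ?thesis using hi[of v] by (simp add: qfSR)
  qed
  ultimately show ?thesis by blast
qed

lemma aux_lin: "a \<le> (1+m)*c \<Longrightarrow> b = a - (1-m)*c \<Longrightarrow> b \<le> 2*m*(c::real)"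
proof -
  assume h: "a \<le> (1+m)*c" "b = a - (1-m)*c"
  have "b = a - c + m*c" using h(2) by (simp add: algebra_simps)
  also have "\<dots> \<le> (1+m)*c - c + m*c" using h(1) by simp
  also have "\<dots> = 2*m*c" by (simp add: algebra_simps)
  finally show ?thesis .
qed

lemma contraction:
  assumes SJ: "symm J" and IJ: "invertible (J::real^'n^'n)" and PJ: "psd J"
    and SQ: "symm Q" and m: "0 \<le> m"
    and lo: "\<And>g. (1 - m) * qf (matrix_inv J) g \<le> qf Q g"
    and hi: "\<And>g. qf Q g \<le> (1 + m) * qf (matrix_inv J) g"
  shows "qf J ((matrix_inv J - Q) *v g) \<le> m^2 * qf (matrix_inv J) g"
proof -
  define P where "P = matrix_inv J"
  define E where "E = Q - (1 - m) *\<^sub>R P"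
  have SP: "symm P" using symm_inv[OF SJ IJ] P_def by simp
  have SE: "symm E" unfolding E_def by (intro symm_diff SQ symm_scale SP)
  have qfE: "qf E h = qf Q h - (1 - m) * qf P h" for h by (simp add: E_def qf_diff qf_scale)
  have PE: "psd E" unfolding psd_def using lo qfE P_def by simp
  have JP: "J *v (P *v h) = h" for h using inv_mv1[OF IJ] P_def by simp
  have PJh: "P *v (J *v h) = h" for h using inv_mv2[OF IJ] P_def by simp
  have Eg: "E *v g = Q *v g - (1 - m) *\<^sub>R (P *v g)" by (simp add: E_def mv_diff mv_scale)
  have d_eq: "(P - Q) *v g = m *\<^sub>R (P *v g) - E *v g"
    unfolding Eg mv_diff by (simp add: algebra_simps)
  define e where "e = qf E g"
  define X where "X = qf J (E *v g)"
  have e0: "0 \<le> e" using PE psd_def e_def by blast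
  have X0: "0 \<le> X" using PJ psd_def X_def by blast
  have t1: "qf J (P *v g) = qf P g" by (simp add: qf_def JP inner_commute)
  have t2: "(P *v g) \<bullet> (J *v (E *v g)) = e"
    using symm_swap[OF SJ, of "P *v g" "E *v g"] by (simp add: JP e_def qf_def inner_commute)
  have XX: "X \<le> 2 * m * e"
  proof -
    define h where "h = J *v (E *v g)"
    have "g \<bullet> (E *v h) = h \<bullet> (E *v g)" using symm_swap[OF SE, of g h] .
    also have "\<dots> = X" by (simp add: h_def X_def qf_def inner_commute)
    finally have gEh: "g \<bullet> (E *v h) = X" .
    have qEh: "qf E h \<le> 2 * m * X"
    proof -
      have "qf E h \<le> 2 * m * qf P h" 
      proof -
        have "qf Q h \<le> (1 + m) * qf P h" using hi[of h] P_def by simp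
        then show ?thesis by (rule aux_lin[OF _ qfE[of h]])
      qed
      also have "qf P h = X"
        by (simp add: qf_def h_def PJh X_def inner_commute)
      finally show ?thesis .
    qed
    have "(g \<bullet> (E *v h))^2 \<le> qf E g * qf E h" by (rule CS_psd[OF SE PE])
    also have "\<dots> \<le> e * (2 * m * X)" using qEh e0 unfolding e_def by (rule mult_left_mono)
    finally have "X^2 \<le> e * (2 * m * X)" using gEh by simp
    moreover have "e * (2 * m * X) = (2 * m * e) * X" by (metis mult.commute mult.assoc)
    ultimately have XXc: "X * X \<le> (2 * m * e) * X" by (simp add: power2_eq_square)
    show ?thesis
    proof (cases "X = 0")
      case True then show ?thesis using e0 m by simp
    next
      case False
      then have "0 < X" using X0 by simp
      then show ?thesis using XXc mult_le_cancel_right_pos by blast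
    qed
  qed
  have "qf J ((P - Q) *v g) = m^2 * qf J (P *v g) - 2 * m * ((P *v g) \<bullet> (J *v (E *v g))) + X"
    unfolding d_eq using qf_vdiff[OF SJ, of "m *\<^sub>R (P *v g)" "E *v g"]
    by (simp add: qf_vscale X_def mv_vscale power2_eq_square)
  also have "\<dots> = m^2 * qf P g - 2 * m * e + X" using t1 t2 by simp
  also have "\<dots> \<le> m^2 * qf P g" using XX by simp
  finally show ?thesis by (simp add: P_def)
qed

lemma hess_approx:
  fixes f :: "real^'n \<Rightarrow> real" and grad :: "real^'n \<Rightarrow> real^'n" and hess :: "real^'n \<Rightarrow> real^'n^'n"
  assumes grad: "\<And>y. (f has_derivative (\<lambda>h. grad y \<bullet> h)) (at y)"
    and hess: "\<And>y. (grad has_derivative (\<lambda>h. hess y *v h)) (at y)"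
    and e: "0 < e"
  shows "\<exists>d>0. \<forall>h. 0 < h \<and> h < d \<longrightarrow>
     \<bar>(f (y + h *\<^sub>R a + h *\<^sub>R b) - f (y + h *\<^sub>R a) - f (y + h *\<^sub>R b) + f y)
        - h^2 * (a \<bullet> (hess y *v b))\<bar> \<le> e * h^2 * (norm a * (2 * norm a + norm b))"
proof -
  obtain d0 where d0: "d0 > 0" and
    D: "\<And>z. norm (z - y) < d0 \<Longrightarrow> norm (grad z - grad y - hess y *v (z - y)) \<le> e * norm (z - y)"
    using hess[of y] e unfolding has_derivative_at_alt by blast
  define d where "d = d0 / (norm a + norm b + 1)"
  have np: "norm a + norm b + 1 > 0" by (smt (verit) norm_ge_zero)
  have dpos: "d > 0" using d0 np by (simp add: d_def)
  show ?thesis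
  proof (intro exI[of _ d] conjI dpos allI impI)
    fix h :: real assume hh: "0 < h \<and> h < d"
    define \<phi> where "\<phi> s = f (y + s *\<^sub>R a + h *\<^sub>R b) - f (y + s *\<^sub>R a)" for s
    define \<phi>' where "\<phi>' s = (\<lambda>ds. grad (y + s *\<^sub>R a + h *\<^sub>R b) \<bullet> (ds *\<^sub>R a) - grad (y + s *\<^sub>R a) \<bullet> (ds *\<^sub>R a))" for s
    have der: "(\<phi> has_derivative \<phi>' s) (at s within {0..h})" for s
    proof -
      have l1: "((\<lambda>s. y + s *\<^sub>R a + h *\<^sub>R b) has_derivative (\<lambda>ds. ds *\<^sub>R a)) (at s within {0..h})"
        by (auto intro!: derivative_eq_intros)
      have l2: "((\<lambda>s. y + s *\<^sub>R a) has_derivative (\<lambda>ds. ds *\<^sub>R a)) (at s within {0..h})"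
        by (auto intro!: derivative_eq_intros)
      have c1: "((\<lambda>s. f (y + s *\<^sub>R a + h *\<^sub>R b)) has_derivative (\<lambda>ds. grad (y + s *\<^sub>R a + h *\<^sub>R b) \<bullet> (ds *\<^sub>R a))) (at s within {0..h})"
        using has_derivative_compose[OF l1 grad] .
      have c2: "((\<lambda>s. f (y + s *\<^sub>R a)) has_derivative (\<lambda>ds. grad (y + s *\<^sub>R a) \<bullet> (ds *\<^sub>R a))) (at s within {0..h})"
        using has_derivative_compose[OF l2 grad] .
      show ?thesis unfolding \<phi>_def \<phi>'_def using has_derivative_diff[OF c1 c2] .
    qed
    obtain s where s: "s \<in> {0<..<h}" and mv: "\<phi> h - \<phi> 0 = \<phi>' s (h - 0)"
      using mvt_simple[of 0 h \<phi> \<phi>'] hh der by blast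
    have Delta: "\<phi> h - \<phi> 0 = f (y + h *\<^sub>R a + h *\<^sub>R b) - f (y + h *\<^sub>R a) - f (y + h *\<^sub>R b) + f y"
      by (simp add: \<phi>_def)
    define z1 where "z1 = y + s *\<^sub>R a + h *\<^sub>R b"
    define z2 where "z2 = y + s *\<^sub>R a"
    define R1 where "R1 = grad z1 - grad y - hess y *v (z1 - y)"
    define R2 where "R2 = grad z2 - grad y - hess y *v (z2 - y)"
    have s0: "0 < s" "s < h" using s by auto
    have hd: "h * (norm a + norm b + 1) < d0"
      using hh d0 np by (simp add: d_def pos_less_divide_eq)
    have nz1: "norm (z1 - y) \<le> h * (norm a + norm b)"
    proof -
      have "norm (z1 - y) \<le> norm (s *\<^sub>R a) + norm (h *\<^sub>R b)"
        unfolding z1_def by (metis add_diff_cancel_left' norm_triangle_ineq add.assoc)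
      also have "\<dots> = s * norm a + h * norm b" using s0 by simp
      also have "\<dots> \<le> h * norm a + h * norm b" using s0 by (simp add: mult_right_mono)
      finally show ?thesis by (simp add: algebra_simps)
    qed
    have nz2: "norm (z2 - y) \<le> h * norm a"
      using s0 by (simp add: z2_def mult_right_mono)
    have "h * (norm a + norm b) < d0" using hd hh
      by (smt (verit, ccfv_SIG) mult_left_mono norm_ge_zero)
    then have R1b: "norm R1 \<le> e * (h * (norm a + norm b))"
      using D[of z1] nz1 e unfolding R1_def by (smt (verit) mult_left_mono)
    have "h * norm a < d0" using hd hh
      by (smt (verit, ccfv_SIG) mult_left_mono norm_ge_zero)
    then have R2b: "norm R2 \<le> e * (h * norm a)"
      using D[of z2] nz2 e unfolding R2_def by (smt (verit) mult_left_mono)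
    have zz: "(z1 - y) - (z2 - y) = h *\<^sub>R b" by (simp add: z1_def z2_def)
    have "hess y *v (z1 - y) - hess y *v (z2 - y) = hess y *v (h *\<^sub>R b)"
      by (metis mv_vdiff zz)
    then have Hd: "hess y *v (z1 - y) - hess y *v (z2 - y) = h *\<^sub>R (hess y *v b)"
      by (simp only: mv_vscale)
    have "R1 - R2 = grad z1 - grad z2 - (hess y *v (z1 - y) - hess y *v (z2 - y))"
      by (simp add: R1_def R2_def algebra_simps)
    then have gd: "grad z1 - grad z2 = R1 - R2 + h *\<^sub>R (hess y *v b)"
      unfolding Hd by simp
    have "\<phi>' s (h - 0) = (grad z1 - grad z2) \<bullet> (h *\<^sub>R a)"
      by (simp add: \<phi>'_def z1_def z2_def inner_diff_left right_diff_distrib)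
    also have "\<dots> = h * ((R1 - R2) \<bullet> a) + h^2 * (a \<bullet> (hess y *v b))"
      unfolding gd by (simp add: inner_add_left inner_add_right inner_commute power2_eq_square distrib_left)
    finally have phis: "\<phi>' s (h - 0) = h * ((R1 - R2) \<bullet> a) + h^2 * (a \<bullet> (hess y *v b))" .
    have eq: "(\<phi> h - \<phi> 0) - h^2 * (a \<bullet> (hess y *v b)) = h * ((R1 - R2) \<bullet> a)"
      using mv phis by simp
    have "\<bar>(R1 - R2) \<bullet> a\<bar> \<le> norm (R1 - R2) * norm a" by (rule Cauchy_Schwarz_ineq2)
    also have "\<dots> \<le> (norm R1 + norm R2) * norm a" by (simp add: mult_right_mono norm_triangle_ineq4)
    also have "\<dots> \<le> (e * (h * (norm a + norm b)) + e * (h * norm a)) * norm a"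
      using R1b R2b by (simp add: mult_right_mono)
    finally have "\<bar>(R1 - R2) \<bullet> a\<bar> \<le> e * h * (norm a * (2 * norm a + norm b))"
      by (simp add: algebra_simps)
    then have "\<bar>h * ((R1 - R2) \<bullet> a)\<bar> \<le> h * (e * h * (norm a * (2 * norm a + norm b)))"
      using hh by (simp add: abs_mult mult_left_mono)
    note hb = this
    then show "\<bar>(f (y + h *\<^sub>R a + h *\<^sub>R b) - f (y + h *\<^sub>R a) - f (y + h *\<^sub>R b) + f y)
        - h^2 * (a \<bullet> (hess y *v b))\<bar> \<le> e * h^2 * (norm a * (2 * norm a + norm b))"
    proof -
      have "\<bar>(f (y + h *\<^sub>R a + h *\<^sub>R b) - f (y + h *\<^sub>R a) - f (y + h *\<^sub>R b) + f y)
        - h^2 * (a \<bullet> (hess y *v b))\<bar> = \<bar>h * ((R1 - R2) \<bullet> a)\<bar>" using eq Delta by simp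
      also have "\<dots> \<le> h * (e * h * (norm a * (2 * norm a + norm b)))" by fact
      also have "\<dots> = e * h^2 * (norm a * (2 * norm a + norm b))" by (simp add: power2_eq_square)
      finally show ?thesis .
    qed
  qed
qed

lemma hess_symm:
  fixes f :: "real^'n \<Rightarrow> real" and grad :: "real^'n \<Rightarrow> real^'n" and hess :: "real^'n \<Rightarrow> real^'n^'n"
  assumes grad: "\<And>y. (f has_derivative (\<lambda>h. grad y \<bullet> h)) (at y)"
    and hess: "\<And>y. (grad has_derivative (\<lambda>h. hess y *v h)) (at y)"
  shows "symm (hess y)"
  unfolding symm_def
proof (intro allI)
  fix a b :: "real^'n"
  define K where "K = norm a * (2 * norm a + norm b) + norm b * (2 * norm b + norm a)"
  have K0: "0 \<le> K" unfolding K_def by (intro add_nonneg_nonneg mult_nonneg_nonneg) auto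
  define D where "D = \<bar>a \<bullet> (hess y *v b) - b \<bullet> (hess y *v a)\<bar>"
  show "a \<bullet> (hess y *v b) = b \<bullet> (hess y *v a)"
  proof (rule ccontr)
    assume ne: "a \<bullet> (hess y *v b) \<noteq> b \<bullet> (hess y *v a)"
    then have Dp: "0 < D" by (simp add: D_def)
    define e where "e = D / (2 * (K + 1))"
    have ep: "0 < e" using Dp K0 by (simp add: e_def)
    obtain d1 where d1: "d1 > 0" and H1: "\<And>h. 0 < h \<and> h < d1 \<Longrightarrow>
      \<bar>(f (y + h *\<^sub>R a + h *\<^sub>R b) - f (y + h *\<^sub>R a) - f (y + h *\<^sub>R b) + f y)
        - h^2 * (a \<bullet> (hess y *v b))\<bar> \<le> e * h^2 * (norm a * (2 * norm a + norm b))"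
      using hess_approx[OF grad hess ep, of y a b] by blast
    obtain d2 where d2: "d2 > 0" and H2: "\<And>h. 0 < h \<and> h < d2 \<Longrightarrow>
      \<bar>(f (y + h *\<^sub>R b + h *\<^sub>R a) - f (y + h *\<^sub>R b) - f (y + h *\<^sub>R a) + f y)
        - h^2 * (b \<bullet> (hess y *v a))\<bar> \<le> e * h^2 * (norm b * (2 * norm b + norm a))"
      using hess_approx[OF grad hess ep, of y b a] by blast
    define h where "h = min d1 d2 / 2"
    have hp: "0 < h" "h < d1" "h < d2" using d1 d2 by (auto simp: h_def)
    define F where "F = f (y + h *\<^sub>R a + h *\<^sub>R b) - f (y + h *\<^sub>R a) - f (y + h *\<^sub>R b) + f y"
    have F2: "f (y + h *\<^sub>R b + h *\<^sub>R a) - f (y + h *\<^sub>R b) - f (y + h *\<^sub>R a) + f y = F"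
      unfolding F_def by (simp add: add.assoc add.commute add.left_commute)
    have A1: "\<bar>F - h^2 * (a \<bullet> (hess y *v b))\<bar> \<le> e * h^2 * (norm a * (2 * norm a + norm b))"
      using H1[of h] hp F_def by simp
    have A2: "\<bar>F - h^2 * (b \<bullet> (hess y *v a))\<bar> \<le> e * h^2 * (norm b * (2 * norm b + norm a))"
      using H2[of h] hp F2 by simp
    have "h^2 * D = \<bar>(F - h^2 * (b \<bullet> (hess y *v a))) - (F - h^2 * (a \<bullet> (hess y *v b)))\<bar>"
    proof -
      have "h^2 * D = \<bar>h^2 * (a \<bullet> (hess y *v b) - b \<bullet> (hess y *v a))\<bar>"
        by (simp add: D_def abs_mult)
      then show ?thesis by (simp add: right_diff_distrib)
    qed
    also have "\<dots> \<le> \<bar>F - h^2 * (b \<bullet> (hess y *v a))\<bar> + \<bar>F - h^2 * (a \<bullet> (hess y *v b))\<bar>"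
      by (rule abs_triangle_ineq4)
    also have "\<dots> \<le> e * h^2 * K" 
    proof -
      have "e * h^2 * K = e * h^2 * (norm a * (2 * norm a + norm b)) + e * h^2 * (norm b * (2 * norm b + norm a))"
        unfolding K_def by (rule distrib_left)
      then show ?thesis using A1 A2 by linarith
    qed
    also have "\<dots> < h^2 * D"
    proof -
      have "e * K < D"
      proof -
        have "e * K = D * (K / (2 * (K + 1)))" by (simp add: e_def)
        also have "K / (2 * (K + 1)) < 1" using K0 by simp
        then have "D * (K / (2 * (K + 1))) < D * 1" using Dp by (intro mult_strict_left_mono) auto
        finally show ?thesis by simp
      qed
      then show ?thesis using hp by (simp add: mult.commute mult.left_commute)
    qed
    finally show False by simp
  qed
qed

locale setting =
  fixes f :: "real^'n \<Rightarrow> real" and grad :: "real^'n \<Rightarrow> real^'n" and hess :: "real^'n \<Rightarrow> real^'n^'n"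
    and \<mu> L M :: real
  assumes grad: "\<And>y. (f has_derivative (\<lambda>h. grad y \<bullet> h)) (at y)"
    and hess: "\<And>y. (grad has_derivative (\<lambda>h. hess y *v h)) (at y)"
    and mu_pos: "0 < \<mu>" and mu_le_L: "\<mu> \<le> L"
    and bounds: "\<And>y. loewner_le (\<mu> *\<^sub>R mat 1) (hess y) \<and> loewner_le (hess y) (L *\<^sub>R mat 1)"
    and M_nonneg: "0 \<le> M"
    and ssc: "strongly_self_concordant hess M"
begin

lemma Hsym: "symm (hess y)" by (rule hess_symm[OF grad hess])

lemma qf_id: "qf (c *\<^sub>R mat 1) v = c * (norm v)^2"
proof -
  have "qf (c *\<^sub>R mat 1) v = c * qf (mat 1) v" by (rule qf_scale)
  then show ?thesis by (simp add: qf_def power2_norm_eq_inner)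
qed

lemma Hlo: "\<mu> * (norm v)^2 \<le> qf (hess y) v"
  using bounds[of y] by (simp add: loewner_qf qf_id)
lemma Hhi: "qf (hess y) v \<le> L * (norm v)^2"
  using bounds[of y] by (simp add: loewner_qf qf_id)
lemma Hpsd: "psd (hess y)"
  unfolding psd_def using Hlo mu_pos by (smt (verit) mult_nonneg_nonneg zero_le_power2)
lemma Hpos: "v \<noteq> 0 \<Longrightarrow> 0 < qf (hess y) v"
  using Hlo[of v y] mu_pos by (smt (verit) mult_pos_pos zero_less_norm_iff zero_less_power)

lemma ssc_qf: "qf (hess y) v - qf (hess x) v \<le> M * loc_norm hess z (y - x) * qf (hess w) v"
  using ssc unfolding strongly_self_concordant_def loewner_qf
  by (metis qf_diff qf_scale)

lemma loc_norm_scale: "loc_norm hess z (t *\<^sub>R d) = \<bar>t\<bar> * loc_norm hess z d"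
proof -
  have "loc_norm hess z (t *\<^sub>R d) = sqrt (t^2 * (d \<bullet> (hess z *v d)))"
    by (simp add: loc_norm_def mv_vscale power2_eq_square)
  also have "\<dots> = \<bar>t\<bar> * loc_norm hess z d" by (simp add: real_sqrt_mult loc_norm_def)
  finally show ?thesis .
qed
     
lemma loc_norm_le: "loc_norm hess z d \<le> sqrt L * norm d"
proof -
  have "loc_norm hess z d = sqrt (qf (hess z) d)" by (simp add: loc_norm_def qf_def)
  also have "\<dots> \<le> sqrt (L * (norm d)^2)" using Hhi by (simp add: real_sqrt_le_mono)
  also have "\<dots> = sqrt L * norm d" by (simp add: real_sqrt_mult)
  finally show ?thesis .
qed

lemma loc_norm_nonneg: "0 \<le> loc_norm hess z d"
  using Hpsd[of z] by (simp add: loc_norm_def psd_def qf_def)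

lemma qf_lip: "\<bar>qf (hess y - hess x) v\<bar> \<le> (M * sqrt L * L) * norm (y - x) * (norm v)^2"
proof -
  have L0: "0 \<le> L" using mu_pos mu_le_L by simp
  have gen: "qf (hess a) v - qf (hess b) v \<le> (M * sqrt L * L) * norm (a - b) * (norm v)^2" for a b
  proof -
    have "qf (hess a) v - qf (hess b) v \<le> M * loc_norm hess a (a - b) * qf (hess a) v" by (rule ssc_qf)
    also have "\<dots> \<le> M * (sqrt L * norm (a - b)) * (L * (norm v)^2)"
      using M_nonneg loc_norm_nonneg Hhi Hpsd[of a] loc_norm_le L0
      by (intro mult_mono) (auto simp: psd_def)
    also have "\<dots> = (M * sqrt L * L) * norm (a - b) * (norm v)^2" by simp
    finally show ?thesis .
  qed
  show ?thesis using gen[of y x] gen[of x y] by (simp add: qf_diff norm_minus_commute abs_le_iff)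
qed

lemma polar:
  assumes S: "symm D" and B: "\<And>v. \<bar>qf D v\<bar> \<le> C * (norm v)^2"
  shows "\<bar>a \<bullet> (D *v b)\<bar> \<le> C * ((norm a)^2 + (norm b)^2) / 2"
proof -
  have e: "4 * (a \<bullet> (D *v b)) = qf D (a + b) - qf D (a - b)"
    using qf_vadd[OF S, of a b] qf_vdiff[OF S, of a b] by simp
  have "\<bar>4 * (a \<bullet> (D *v b))\<bar> \<le> C * (norm (a + b))^2 + C * (norm (a - b))^2"
    unfolding e using B[of "a + b"] B[of "a - b"] by linarith
  also have "\<dots> = C * 2 * ((norm a)^2 + (norm b)^2)"
  proof -
    have "(norm (a + b))^2 + (norm (a - b))^2 = 2 * ((norm a)^2 + (norm b)^2)"
      by (simp add: power2_norm_eq_inner inner_add_left inner_add_right inner_diff_left inner_diff_right inner_commute)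
    then have "C * (norm (a + b))^2 + C * (norm (a - b))^2 = C * (2 * ((norm a)^2 + (norm b)^2))"
      by (metis distrib_left)
    then show ?thesis by simp
  qed
  finally show ?thesis by (simp add: abs_mult)
qed

lemma entry: "(A::real^'n^'n) $ i $ j = axis i 1 \<bullet> (A *v axis j 1)"
  by (simp add: inner_axis' matrix_vector_mult_basis column_def)

lemma entry_lip: "dist (hess y $ i $ j) (hess x $ i $ j) \<le> (M * sqrt L * L) * dist y x"
proof -
  have S: "symm (hess y - hess x)" by (intro symm_diff Hsym)
  have "\<bar>axis i 1 \<bullet> ((hess y - hess x) *v axis j 1)\<bar> \<le> ((M * sqrt L * L) * norm (y - x)) * ((norm (axis i (1::real)))^2 + (norm (axis j (1::real)))^2) / 2"
    by (rule polar[OF S]) (use qf_lip in auto)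
  then show ?thesis
    by (simp add: entry[of "hess y"] entry[of "hess x"] dist_real_def dist_norm mv_diff inner_diff_right)
qed

lemma hess_cont: "continuous_on S (\<lambda>t. hess (x + t *\<^sub>R u))"
proof -
  have C0: "0 \<le> M * sqrt L * L" using M_nonneg mu_pos mu_le_L by simp
  have ce: "continuous_on UNIV (\<lambda>y. hess y $ i $ j)" for i j
    by (rule lipschitz_on_continuous_on[OF lipschitz_onI[OF entry_lip C0]])
  have "continuous_on S (\<lambda>t. \<chi> i. \<chi> j. hess (x + t *\<^sub>R u) $ i $ j)"
    by (intro continuous_on_vec_lambda continuous_on_compose2[OF ce] continuous_intros) auto
  then show ?thesis by simp
qed

end

lemma bl_form: "bounded_linear (\<lambda>A::real^'n^'n. a \<bullet> (A *v b))"
proof -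
  have "linear (\<lambda>A::real^'n^'n. a \<bullet> (A *v b))"
    by (rule linearI) (simp_all add: mv_add mv_scale inner_add_right)
  then show ?thesis by (simp add: linear_conv_bounded_linear)
qed

lemma bl_mv: "bounded_linear (\<lambda>A::real^'n^'n. A *v b)"
proof -
  have "linear (\<lambda>A::real^'n^'n. A *v b)"
    by (rule linearI) (simp_all add: mv_add mv_scale)
  then show ?thesis by (simp add: linear_conv_bounded_linear)
qed

lemma lin_int: "((\<lambda>t::real. (c::real) + d * t) has_integral (c + d / 2)) {0..1}"
proof -
  have "((\<lambda>t. c + d * t) has_integral ((c * 1 + d * 1^2 / 2) - (c * 0 + d * 0^2 / 2))) {0..1}"
  proof (rule fundamental_theorem_of_calculus)
    fix t :: real assume "t \<in> {0..1}"
    show "((\<lambda>t. c * t + d * t^2 / 2) has_vector_derivative (c + d * t)) (at t within {0..1})"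
      unfolding has_real_derivative_iff_has_vector_derivative[symmetric]
      by (auto intro!: derivative_eq_intros)
  qed simp
  then show ?thesis by simp
qed

lemma int_upper:
  fixes \<phi> :: "real \<Rightarrow> real" and c d :: real
  assumes "\<phi> integrable_on {0..1}" "\<And>t. t \<in> {0..1} \<Longrightarrow> \<phi> t \<le> c + d * t"
  shows "integral {0..1} \<phi> \<le> c + d / 2"
proof -
  have "integral {0..1} \<phi> \<le> integral {0..1} (\<lambda>t::real. c + d * t)"
    using assms lin_int by (intro integral_le) (auto simp: has_integral_integrable)
  then show ?thesis using lin_int integral_unique by metis
qed

lemma int_lower:
  fixes \<phi> :: "real \<Rightarrow> real" and c d :: real
  assumes "\<phi> integrable_on {0..1}" "\<And>t. t \<in> {0..1} \<Longrightarrow> c + d * t \<le> \<phi> t"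
  shows "c + d / 2 \<le> integral {0..1} \<phi>"
proof -
  have "integral {0..1} (\<lambda>t::real. c + d * t) \<le> integral {0..1} \<phi>"
    using assms lin_int by (intro integral_le) (auto simp: has_integral_integrable)
  then show ?thesis using lin_int integral_unique by metis
qed

context setting begin

lemma H_int: "(\<lambda>t. hess (x + t *\<^sub>R u)) integrable_on {0..1}"
  by (rule integrable_continuous_real[OF hess_cont])

lemma form_int: "(\<lambda>t. a \<bullet> (hess (x + t *\<^sub>R u) *v b)) integrable_on {0..1}"
  using integrable_linear[OF H_int bl_form] by (simp add: comp_def)

lemma J_form: "a \<bullet> (avg_hess hess x u *v b) = integral {0..1} (\<lambda>t. a \<bullet> (hess (x + t *\<^sub>R u) *v b))"
  unfolding avg_hess_def using integral_linear[OF H_int bl_form, of a b] by (simp add: comp_def)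

lemma J_qf: "qf (avg_hess hess x u) v = integral {0..1} (\<lambda>t. qf (hess (x + t *\<^sub>R u)) v)"
  by (simp add: qf_def J_form)

lemma qf_int: "(\<lambda>t. qf (hess (x + t *\<^sub>R u)) v) integrable_on {0..1}"
  unfolding qf_def by (rule form_int)

lemma J_symm: "symm (avg_hess hess x u)"
  unfolding symm_def J_form using symm_swap[OF Hsym] by simp

lemma J_grad: "avg_hess hess x u *v u = grad (x + u) - grad x"
proof -
  have "avg_hess hess x u *v u = integral {0..1} (\<lambda>t. hess (x + t *\<^sub>R u) *v u)"
    unfolding avg_hess_def using integral_linear[OF H_int bl_mv, of u] by (simp add: comp_def)
  also have "\<dots> = grad (x + 1 *\<^sub>R u) - grad (x + 0 *\<^sub>R u)"
  proof (rule integral_unique, rule fundamental_theorem_of_calculus)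
    fix t :: real assume "t \<in> {0..1}"
    have d1: "((\<lambda>t. x + t *\<^sub>R u) has_derivative (\<lambda>dt. dt *\<^sub>R u)) (at t within {0..1})"
      by (auto intro!: derivative_eq_intros)
    have "((\<lambda>t. grad (x + t *\<^sub>R u)) has_derivative (\<lambda>dt. hess (x + t *\<^sub>R u) *v (dt *\<^sub>R u))) (at t within {0..1})"
      using has_derivative_compose[OF d1 hess] .
    then show "((\<lambda>t. grad (x + t *\<^sub>R u)) has_vector_derivative hess (x + t *\<^sub>R u) *v u) (at t within {0..1})"
      unfolding has_vector_derivative_def by (simp add: mv_vscale)
  qed simp
  finally show ?thesis by simp
qed

lemma J_lo: "\<mu> * (norm v)^2 \<le> qf (avg_hess hess x u) v"
proof -
  have "\<mu> * (norm v)^2 + 0 / 2 \<le> integral {0..1} (\<lambda>t. qf (hess (x + t *\<^sub>R u)) v)"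
    by (rule int_lower[OF qf_int]) (simp add: Hlo)
  then show ?thesis by (simp add: J_qf)
qed

lemma J_pos: "v \<noteq> 0 \<Longrightarrow> 0 < qf (avg_hess hess x u) v"
  using J_lo[of v x u] mu_pos by (smt (verit) mult_pos_pos zero_less_norm_iff zero_less_power)

lemma J_psd: "psd (avg_hess hess x u)"
  unfolding psd_def using J_lo mu_pos by (smt (verit) mult_nonneg_nonneg zero_le_power2)

lemma loc_norm_neg: "loc_norm hess z (- d) = loc_norm hess z d"
  using loc_norm_scale[of z "-1" d] by simp

lemma L1: "qf (avg_hess hess x u) v \<le> (1 + M * loc_norm hess x u / 2) * qf (hess x) v"
proof -
  define r where "r = loc_norm hess x u"
  define q0 where "q0 = qf (hess x) v"
  have "integral {0..1} (\<lambda>t. qf (hess (x + t *\<^sub>R u)) v) \<le> q0 + (M * r * q0) / 2"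
  proof (rule int_upper[OF qf_int])
    fix t :: real assume t: "t \<in> {0..1}"
    have "qf (hess (x + t *\<^sub>R u)) v - qf (hess x) v \<le> M * loc_norm hess x ((x + t *\<^sub>R u) - x) * qf (hess x) v"
      by (rule ssc_qf)
    also have "loc_norm hess x ((x + t *\<^sub>R u) - x) = t * r"
      using t loc_norm_scale[of x t u] by (simp add: r_def)
    finally show "qf (hess (x + t *\<^sub>R u)) v \<le> q0 + M * r * q0 * t"
      by (simp add: q0_def algebra_simps)
  qed
  then show ?thesis by (simp add: J_qf r_def q0_def algebra_simps)
qed

lemma L3: "qf (avg_hess hess x u) v \<le> (1 + M * loc_norm hess x u / 2) * qf (hess (x + u)) v"
proof -
  define r where "r = loc_norm hess x u"
  define q1 where "q1 = qf (hess (x + u)) v"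
  have "integral {0..1} (\<lambda>t. qf (hess (x + t *\<^sub>R u)) v) \<le> (q1 + M * r * q1) + (- (M * r * q1)) / 2"
  proof (rule int_upper[OF qf_int])
    fix t :: real assume t: "t \<in> {0..1}"
    have "qf (hess (x + t *\<^sub>R u)) v - qf (hess (x + u)) v \<le> M * loc_norm hess x ((x + t *\<^sub>R u) - (x + u)) * qf (hess (x + u)) v"
      by (rule ssc_qf)
    also have "(x + t *\<^sub>R u) - (x + u) = (t - 1) *\<^sub>R u" by (simp add: algebra_simps)
    also have "loc_norm hess x ((t - 1) *\<^sub>R u) = (1 - t) * r"
      using t loc_norm_scale[of x "t - 1" u] by (simp add: r_def)
    finally show "qf (hess (x + t *\<^sub>R u)) v \<le> (q1 + M * r * q1) + (- (M * r * q1)) * t"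
      by (simp add: q1_def algebra_simps)
  qed
  then show ?thesis by (simp add: J_qf r_def q1_def algebra_simps)
qed

lemma L2: "qf (hess x) v \<le> (1 + M * loc_norm hess x u / 2) * qf (avg_hess hess x u) v"
proof -
  define r where "r = loc_norm hess x u"
  define q0 where "q0 = qf (hess x) v"
  define Q where "Q = qf (avg_hess hess x u) v"
  have pt: "q0 - qf (hess (x + t *\<^sub>R u)) v \<le> M * t * r * Q" if t: "t \<in> {0..1}" for t
  proof -
    have "q0 - qf (hess (x + t *\<^sub>R u)) v + 0 / 2 \<le> M * t * r * Q"
      unfolding Q_def J_qf
    proof -
      have "(M * t * r) * integral {0..1} (\<lambda>s. qf (hess (x + s *\<^sub>R u)) v) = integral {0..1} (\<lambda>s. (M * t * r) * qf (hess (x + s *\<^sub>R u)) v)"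
        by simp
      also have "q0 - qf (hess (x + t *\<^sub>R u)) v + 0 / 2 \<le> \<dots>"
      proof (rule int_lower)
        show "(\<lambda>s. M * t * r * qf (hess (x + s *\<^sub>R u)) v) integrable_on {0..1}"
          using integrable_on_cmult_left[OF qf_int, where c="M * t * r"] by simp
        fix s :: real assume "s \<in> {0..1}"
        have "qf (hess x) v - qf (hess (x + t *\<^sub>R u)) v \<le> M * loc_norm hess x (x - (x + t *\<^sub>R u)) * qf (hess (x + s *\<^sub>R u)) v"
          by (rule ssc_qf)
        also have "x - (x + t *\<^sub>R u) = - (t *\<^sub>R u)" by simp
        also have "loc_norm hess x (- (t *\<^sub>R u)) = t * r"
          using t loc_norm_scale[of x t u] loc_norm_neg by (simp add: r_def)
        finally show "q0 - qf (hess (x + t *\<^sub>R u)) v + 0 * s \<le> M * t * r * qf (hess (x + s *\<^sub>R u)) v"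
          by (simp add: q0_def)
      qed
      finally show "q0 - qf (hess (x + t *\<^sub>R u)) v + 0 / 2 \<le> M * t * r * integral {0..1} (\<lambda>t. qf (hess (x + t *\<^sub>R u)) v)" .
    qed
    then show ?thesis by simp
  qed
  have "q0 + (- (M * r * Q)) / 2 \<le> integral {0..1} (\<lambda>t. qf (hess (x + t *\<^sub>R u)) v)"
  proof (rule int_lower[OF qf_int])
    fix t :: real assume "t \<in> {0..1}"
    then show "q0 + (- (M * r * Q)) * t \<le> qf (hess (x + t *\<^sub>R u)) v"
      using pt[of t] by (simp add: algebra_simps)
  qed
  then show ?thesis by (simp add: J_qf[symmetric] Q_def r_def q0_def algebra_simps)
qed

lemma L4: "qf (hess (x + u)) v \<le> (1 + M * loc_norm hess x u / 2) * qf (avg_hess hess x u) v"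
proof -
  define r where "r = loc_norm hess x u"
  define q1 where "q1 = qf (hess (x + u)) v"
  define Q where "Q = qf (avg_hess hess x u) v"
  have pt: "q1 - qf (hess (x + t *\<^sub>R u)) v \<le> M * (1 - t) * r * Q" if t: "t \<in> {0..1}" for t
  proof -
    have "q1 - qf (hess (x + t *\<^sub>R u)) v + 0 / 2 \<le> M * (1 - t) * r * integral {0..1} (\<lambda>s. qf (hess (x + s *\<^sub>R u)) v)"
    proof -
      have "(M * (1 - t) * r) * integral {0..1} (\<lambda>s. qf (hess (x + s *\<^sub>R u)) v) = integral {0..1} (\<lambda>s. (M * (1 - t) * r) * qf (hess (x + s *\<^sub>R u)) v)"
        by simp
      also have "q1 - qf (hess (x + t *\<^sub>R u)) v + 0 / 2 \<le> \<dots>"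
      proof (rule int_lower)
        show "(\<lambda>s. M * (1 - t) * r * qf (hess (x + s *\<^sub>R u)) v) integrable_on {0..1}"
          using integrable_on_cmult_left[OF qf_int, where c="M * (1 - t) * r"] by simp
        fix s :: real assume "s \<in> {0..1}"
        have "qf (hess (x + u)) v - qf (hess (x + t *\<^sub>R u)) v \<le> M * loc_norm hess x ((x + u) - (x + t *\<^sub>R u)) * qf (hess (x + s *\<^sub>R u)) v"
          by (rule ssc_qf)
        also have "(x + u) - (x + t *\<^sub>R u) = (1 - t) *\<^sub>R u" by (simp add: algebra_simps)
        also have "loc_norm hess x ((1 - t) *\<^sub>R u) = (1 - t) * r"
          using t loc_norm_scale[of x "1 - t" u] by (simp add: r_def)
        finally show "q1 - qf (hess (x + t *\<^sub>R u)) v + 0 * s \<le> M * (1 - t) * r * qf (hess (x + s *\<^sub>R u)) v"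
          by (simp add: q1_def)
      qed
      finally show ?thesis .
    qed
    then show ?thesis by (simp add: Q_def J_qf)
  qed
  have "(q1 - M * r * Q) + (M * r * Q) / 2 \<le> integral {0..1} (\<lambda>t. qf (hess (x + t *\<^sub>R u)) v)"
  proof (rule int_lower[OF qf_int])
    fix t :: real assume "t \<in> {0..1}"
    then show "(q1 - M * r * Q) + (M * r * Q) * t \<le> qf (hess (x + t *\<^sub>R u)) v"
      using pt[of t] by (simp add: algebra_simps)
  qed
  then show ?thesis by (simp add: J_qf[symmetric] Q_def r_def q1_def algebra_simps)
qed

end

lemma exp2_bound: "0 \<le> (b::real) \<Longrightarrow> 2 * b < 1 \<Longrightarrow> exp b * (1 + b) \<le> 1 / (1 - 2 * b)"
proof -
  assume b: "0 \<le> b" "2 * b < 1"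
  have "1 + b \<le> exp b" by (rule exp_ge_add_one_self)
  then have "exp b * (1 + b) \<le> exp b * exp b" using b by (simp add: mult_left_mono)
  also have "\<dots> = exp (2 * b)" by (simp add: exp_add[symmetric])
  also have "\<dots> = 1 / exp (- (2 * b))" by (simp add: exp_minus field_simps)
  also have "\<dots> \<le> 1 / (1 - 2 * b)"
  proof -
    have "1 + (- (2 * b)) \<le> exp (- (2 * b))" by (rule exp_ge_add_one_self)
    then show ?thesis using b by (intro divide_left_mono) auto
  qed
  finally show ?thesis .
qed

lemma num_main:
  fixes t a b C m :: real
  assumes t: "0 < t" "t \<le> 1" and a: "0 \<le> a" "a \<le> t / 16" and b: "0 \<le> b" "b \<le> t / 16"
    and C: "0 < C" "C \<le> 3 / (2 * t)"
    and m: "m = max (1 - 1 / C) ((1 + a) * (1 + b) - 1)"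
  shows "exp b * (1 + b) * m \<le> 1 - t / 2"
proof -
  have E: "exp b * (1 + b) \<le> 8 / (8 - t)"
  proof -
    have "exp b * (1 + b) \<le> 1 / (1 - 2 * b)" using b t by (intro exp2_bound) auto
    also have "\<dots> \<le> 8 / (8 - t)" using b t by (simp add: field_simps)
    finally show ?thesis .
  qed
  have E0: "0 \<le> exp b * (1 + b)" using b by simp
  have c1: "0 \<le> (1 + a) * (1 + b) - 1" using a b by (simp add: algebra_simps)
  have m0: "0 \<le> m" using m c1 by simp
  have br1: "8 / (8 - t) * (1 - 1 / C) \<le> 1 - t / 2"
  proof -
    have "2 * t / 3 \<le> 1 / C" using C t by (simp add: field_simps)
    then have "1 - 1 / C \<le> 1 - 2 * t / 3" by simp
    then have "8 / (8 - t) * (1 - 1 / C) \<le> 8 / (8 - t) * (1 - 2 * t / 3)"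
      using t by (intro mult_left_mono) auto
    also have "\<dots> \<le> 1 - t / 2" using t by (simp add: field_simps)
    finally show ?thesis .
  qed
  have br2: "8 / (8 - t) * ((1 + a) * (1 + b) - 1) \<le> 1 - t / 2"
  proof -
    have "(1 + a) * (1 + b) - 1 = a + b + a * b" by (simp add: algebra_simps)
    also have "\<dots> \<le> t / 16 + t / 16 + (t / 16) * (t / 16)" using a b by (intro add_mono mult_mono) auto
    also have "\<dots> \<le> t / 7" using t by (simp add: field_simps)
    finally have "(1 + a) * (1 + b) - 1 \<le> t / 7" .
    then have "8 / (8 - t) * ((1 + a) * (1 + b) - 1) \<le> 8 / (8 - t) * (t / 7)"
      using t by (intro mult_left_mono) auto
    also have "\<dots> \<le> 1 - t / 2" using t by (simp add: field_simps) (smt (verit) mult_nonneg_nonneg)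
    finally show ?thesis .
  qed
  have "exp b * (1 + b) * m \<le> 8 / (8 - t) * m" using E m0 by (rule mult_right_mono)
  also have "\<dots> \<le> 1 - t / 2" using br1 br2 m by (cases "1 - 1 / C \<le> (1 + a) * (1 + b) - 1") (auto simp: max_def)
  finally show ?thesis .
qed

definition pd :: "real^'n^'n \<Rightarrow> bool" where "pd A \<longleftrightarrow> (\<forall>v. v \<noteq> 0 \<longrightarrow> 0 < qf A v)"

lemma pd_psd: "pd A \<Longrightarrow> psd A"
  unfolding pd_def psd_def by (metis order_le_less qf_def inner_zero_left)

lemma pd_inv: "pd A \<Longrightarrow> invertible A"
  unfolding pd_def by (rule pd_invertible) auto

lemma anti:
  assumes SA: "symm A" and SB: "symm B" and PA: "pd A" and PB: "pd B"
    and le: "\<And>v. qf A v \<le> c * qf B v" and c: "0 < c"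
  shows "qf (matrix_inv B) w \<le> c * qf (matrix_inv A) w"
proof -
  have "(1 / c) * qf (matrix_inv B) w \<le> qf (matrix_inv A) w"
  proof (rule inv_antitone[OF SA SB pd_inv[OF PA] pd_inv[OF PB] pd_psd[OF PA]])
    fix v show "1 / c * qf A v \<le> qf B v" using le[of v] c by (simp add: field_simps)
  qed (use c in simp)
  then show ?thesis using c by (simp add: field_simps)
qed

lemma inv_psd: "symm A \<Longrightarrow> pd A \<Longrightarrow> 0 \<le> qf (matrix_inv A) w"
  using inv_qf_eq[OF pd_inv] pd_psd psd_def by metis

locale run = setting f grad hess \<mu> L M
  for f :: "real^'n \<Rightarrow> real" and grad hess \<mu> L M +
  fixes x :: "nat \<Rightarrow> real^'n" and G :: "nat \<Rightarrow> real^'n^'n"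
  assumes G0: "G 0 = L *\<^sub>R mat 1"
    and x_step: "\<And>k. x (Suc k) = x k - matrix_inv (G k) *v grad (x k)"
    and G_step: "\<And>k. G (Suc k) =
       SR1 (avg_hess hess (x k) (x (Suc k) - x k))
           (((1 + M * (if k = 0 then 0 else loc_norm hess (x (k - 1)) (x k - x (k - 1))) / 2)
             * (1 + M * loc_norm hess (x k) (x (Suc k) - x k) / 2)) *\<^sub>R G k)
           (x (Suc k) - x k)"
    and init: "M * newton_decr grad hess (x 0) \<le> ln (3/2) / (4 * (L / \<mu>))"
begin

definition "\<kappa> = L / \<mu>"
definition "r i = loc_norm hess (x i) (x (Suc i) - x i)"
definition "rp i = (if i = 0 then 0 else r (i - 1))"
definition "Jp k = (if k = 0 then hess (x 0) else avg_hess hess (x (k - 1)) (x k - x (k - 1)))"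
definition "J k = avg_hess hess (x k) (x (Suc k) - x k)"
definition "\<xi> k = exp (M * (\<Sum>i<k. rp i + r i))"
definition "q = 1 - 1 / (2 * \<kappa>)"
definition "lam k = newton_decr grad hess (x k)"
definition "g k = grad (x k)"

lemma kappa_ge1: "1 \<le> \<kappa>" using mu_pos mu_le_L by (simp add: \<kappa>_def)
lemma q_bounds: "1/2 \<le> q" "q < 1" "0 \<le> q"
  using kappa_ge1 by (auto simp: q_def field_simps)

lemma Jp_Suc: "Jp (Suc k) = J k" by (simp add: Jp_def J_def)
lemma rp_Suc: "rp (Suc k) = r k" by (simp add: rp_def)
lemma r_nonneg: "0 \<le> r k" by (simp add: r_def loc_norm_nonneg)
lemma rp_nonneg: "0 \<le> rp k" by (simp add: rp_def r_nonneg)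

lemma F1: "qf (hess (x k)) v \<le> (1 + M * rp k / 2) * qf (Jp k) v"
proof (cases k)
  case 0 then show ?thesis by (simp add: Jp_def rp_def)
next
  case (Suc j)
  have "qf (hess (x j + (x (Suc j) - x j))) v \<le> (1 + M * loc_norm hess (x j) (x (Suc j) - x j) / 2) * qf (avg_hess hess (x j) (x (Suc j) - x j)) v"
    by (rule L4)
  then show ?thesis using Suc by (simp add: Jp_def rp_def r_def)
qed

lemma F2: "qf (Jp k) v \<le> (1 + M * rp k / 2) * qf (hess (x k)) v"
proof (cases k)
  case 0 then show ?thesis by (simp add: Jp_def rp_def)
next
  case (Suc j)
  have "qf (avg_hess hess (x j) (x (Suc j) - x j)) v \<le> (1 + M * loc_norm hess (x j) (x (Suc j) - x j) / 2) * qf (hess (x j + (x (Suc j) - x j))) v"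
    by (rule L3)
  then show ?thesis using Suc by (simp add: Jp_def rp_def r_def)
qed

lemma F3: "qf (J k) v \<le> (1 + M * r k / 2) * qf (hess (x k)) v"
  unfolding J_def r_def by (rule L1)

lemma F4: "qf (hess (x k)) v \<le> (1 + M * r k / 2) * qf (J k) v"
  unfolding J_def r_def by (rule L2)

lemma H_pd: "pd (hess y)" unfolding pd_def using Hpos by blast
lemma J_pd: "pd (J k)" unfolding pd_def J_def using J_pos by blast
lemma J_sym: "symm (J k)" unfolding J_def by (rule J_symm)
lemma Jp_pd: "pd (Jp k)" unfolding Jp_def using J_pd[unfolded J_def] H_pd
  by (cases k) auto
lemma Jp_sym: "symm (Jp k)" unfolding Jp_def using J_symm Hsym by simp

lemma u_eq: "x (Suc k) - x k = - (matrix_inv (G k) *v g k)"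
  using x_step[of k] by (simp add: g_def)

lemma g_Suc: "g (Suc k) = g k - J k *v (matrix_inv (G k) *v g k)"
proof -
  have "J k *v (x (Suc k) - x k) = grad (x k + (x (Suc k) - x k)) - grad (x k)"
    unfolding J_def by (rule J_grad)
  then have "g (Suc k) = g k + J k *v (x (Suc k) - x k)" by (simp add: g_def)
  then show ?thesis by (simp add: u_eq mv_vneg)
qed

lemma lam_sq: "(lam k)^2 = qf (matrix_inv (hess (x k))) (g k)" "0 \<le> lam k"
proof -
  have "0 \<le> qf (matrix_inv (hess (x k))) (g k)" by (rule inv_psd[OF Hsym H_pd])
  then show "(lam k)^2 = qf (matrix_inv (hess (x k))) (g k)" "0 \<le> lam k"
    by (simp_all add: lam_def newton_decr_def qf_def g_def)
qed

lemma r_sq: "(r k)^2 = qf (hess (x k)) (x (Suc k) - x k)"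
  using Hpsd[of "x k"] by (simp add: r_def loc_norm_def qf_def psd_def)

lemma lam0_nonneg: "0 \<le> lam 0" using lam_sq(2) .

lemma Mlam0: "M * lam 0 \<le> 1 / (8 * \<kappa>)"
proof -
  have "ln (3/2::real) \<le> 1/2"
  proof -
    have "3/2 \<le> exp (1/2::real)" using exp_ge_add_one_self[of "1/2::real"] by simp
    then have "ln (3/2::real) \<le> ln (exp (1/2))" by (subst ln_le_cancel_iff) auto
    then show ?thesis by simp
  qed
  then have "ln (3/2) / (4 * \<kappa>) \<le> (1/2) / (4 * \<kappa>)" using kappa_ge1
    by (intro divide_right_mono) auto
  then show ?thesis using init by (simp add: lam_def \<kappa>_def)
qed


lemma chain2: "X \<le> \<alpha> * Y \<Longrightarrow> Y \<le> \<beta> * Z \<Longrightarrow> 0 \<le> \<alpha> \<Longrightarrow> X \<le> (\<alpha> * \<beta>) * (Z::real)"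
  by (metis mult_left_mono order_trans mult.assoc)

lemma a_nonneg: "0 \<le> 1 + M * rp k / 2" using M_nonneg rp_nonneg by simp
lemma b_nonneg: "0 \<le> 1 + M * r k / 2" using M_nonneg r_nonneg by simp

lemma rp_alt: "rp k = (if k = 0 then 0 else loc_norm hess (x (k - 1)) (x k - x (k - 1)))"
  by (cases k) (simp_all add: rp_def r_def)

lemma xi_Suc: "\<xi> (Suc k) = \<xi> k * exp (M * (rp k + r k))"
  by (simp add: \<xi>_def exp_add[symmetric] distrib_left)

lemma xi_pos: "0 < \<xi> k" by (simp add: \<xi>_def)

lemma c_exp: "(1 + M * rp k / 2) * (1 + M * r k / 2) \<le> exp (M * rp k / 2) * exp (M * r k / 2)"
  using a_nonneg b_nonneg by (intro mult_mono exp_ge_add_one_self) auto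

lemma c_ge1: "1 \<le> (1 + M * rp k / 2) * (1 + M * r k / 2)"
  using M_nonneg rp_nonneg r_nonneg by (simp add: algebra_simps)

lemma c_le_xi: "\<xi> k * ((1 + M * rp k / 2) * (1 + M * r k / 2))^2 \<le> \<xi> (Suc k)"
proof -
  have "((1 + M * rp k / 2) * (1 + M * r k / 2))^2 \<le> (exp (M * rp k / 2) * exp (M * r k / 2))^2"
    using c_exp[of k] c_ge1[of k] by (intro power_mono) auto
  also have "\<dots> = exp (M * (rp k + r k))"
    by (simp add: exp_add[symmetric] power2_eq_square distrib_left)
  finally show ?thesis using xi_pos[of k] by (simp add: xi_Suc)
qed

lemma c_le_xi1: "\<xi> k * ((1 + M * rp k / 2) * (1 + M * r k / 2)) \<le> \<xi> (Suc k)"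
proof -
  have "(1 + M * rp k / 2) * (1 + M * r k / 2) \<le> ((1 + M * rp k / 2) * (1 + M * r k / 2))^2"
  proof -
    define c where "c = (1 + M * rp k / 2) * (1 + M * r k / 2)"
    have "1 \<le> c" using c_ge1[of k] by (simp add: c_def)
    then have "c * 1 \<le> c * c" by (intro mult_left_mono) auto
    then show ?thesis by (simp add: c_def power2_eq_square)
  qed
  then have "\<xi> k * ((1 + M * rp k / 2) * (1 + M * r k / 2)) \<le> \<xi> k * ((1 + M * rp k / 2) * (1 + M * r k / 2))^2"
    using xi_pos[of k] by (intro mult_left_mono) auto
  then show ?thesis using c_le_xi[of k] by linarith
qed

lemma JleG:
  assumes lo: "\<And>v. qf (Jp k) v \<le> qf (G k) v"
  shows "qf (J k) v \<le> ((1 + M * rp k / 2) * (1 + M * r k / 2)) * qf (G k) v"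
proof -
  have "qf (J k) v \<le> ((1 + M * r k / 2) * (1 + M * rp k / 2)) * qf (Jp k) v"
    by (rule chain2[OF F3 F1 b_nonneg])
  also have "\<dots> \<le> ((1 + M * r k / 2) * (1 + M * rp k / 2)) * qf (G k) v"
    using lo a_nonneg b_nonneg by (intro mult_left_mono) auto
  finally show ?thesis by (simp add: mult.commute)
qed

lemma GleJ:
  assumes hi: "\<And>v. qf (G k) v \<le> \<xi> k * \<kappa> * qf (Jp k) v"
  shows "qf (G k) v \<le> (\<xi> k * \<kappa> * ((1 + M * rp k / 2) * (1 + M * r k / 2))) * qf (J k) v"
proof -
  have k0: "0 \<le> \<xi> k * \<kappa>" using xi_pos kappa_ge1 by (simp add: less_imp_le)
  have "qf (Jp k) v \<le> ((1 + M * rp k / 2) * (1 + M * r k / 2)) * qf (J k) v"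
    by (rule chain2[OF F2 F4 a_nonneg])
  then have "\<xi> k * \<kappa> * qf (Jp k) v \<le> \<xi> k * \<kappa> * (((1 + M * rp k / 2) * (1 + M * r k / 2)) * qf (J k) v)"
    using k0 by (rule mult_left_mono)
  then show ?thesis using hi[of v] by (simp add: mult.assoc)
qed

lemma G_pd: "(\<And>v. qf (Jp k) v \<le> qf (G k) v) \<Longrightarrow> pd (G k)"
  using Jp_pd[of k] unfolding pd_def by (meson less_le_trans)

lemma qf_neg: "qf A (- v) = qf A v" by (simp add: qf_def mv_vneg)

lemma r_bound:
  assumes SG: "symm (G k)" and lo: "\<And>v. qf (Jp k) v \<le> qf (G k) v"
  shows "r k \<le> exp (M * rp k / 2) * lam k"
proof -
  define a where "a = M * rp k / 2"
  define u where "u = x (Suc k) - x k"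
  have a0: "0 \<le> a" using M_nonneg rp_nonneg by (simp add: a_def)
  have PG: "pd (G k)" by (rule G_pd) (rule lo)
  have s1: "qf (hess (x k)) u \<le> (1 + a) * qf (Jp k) u"
    using F1 by (simp add: a_def)
  have s2: "(1 + a) * qf (Jp k) u \<le> (1 + a) * qf (G k) u"
    using lo a0 by (intro mult_left_mono) auto
  have s3: "qf (G k) u = qf (matrix_inv (G k)) (g k)"
    by (simp add: u_def u_eq qf_neg inv_qf_eq[OF pd_inv[OF PG]])
  have s4: "qf (matrix_inv (G k)) (g k) \<le> 1 * qf (matrix_inv (Jp k)) (g k)"
    by (rule anti[OF Jp_sym SG Jp_pd PG]) (use lo in auto)
  have s5: "qf (matrix_inv (Jp k)) (g k) \<le> (1 + a) * qf (matrix_inv (hess (x k))) (g k)"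
    using anti[OF Hsym Jp_sym H_pd Jp_pd F1, of k] a0 by (simp add: a_def)
  have s6: "qf (matrix_inv (hess (x k))) (g k) = (lam k)^2" by (simp add: lam_sq)
  have "(r k)^2 \<le> (1 + a) * qf (G k) u" using r_sq[of k] s1 s2 by (simp add: u_def)
  also have "\<dots> \<le> (1 + a) * ((1 + a) * (lam k)^2)"
    using s3 s4 s5 s6 a0 by (intro mult_left_mono) auto
  also have "\<dots> = ((1 + a) * lam k)^2" by (simp add: power2_eq_square)
  finally have "(r k)^2 \<le> ((1 + a) * lam k)^2" .
  moreover have y0: "0 \<le> (1 + a) * lam k" using a0 lam_sq(2)[of k] by simp
  ultimately have "r k \<le> (1 + a) * lam k" by (rule power2_le_imp_le)
  also have "\<dots> \<le> exp a * lam k" using lam_sq(2) by (intro mult_right_mono exp_ge_add_one_self) auto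
  finally show ?thesis by (simp add: a_def)
qed


lemma a_small: "M * rp k / 2 \<le> (1 / \<kappa>) / 16" if "rp k \<le> lam 0"
proof -
  have "M * rp k \<le> M * lam 0" using that M_nonneg by (rule mult_left_mono)
  then show ?thesis using Mlam0 by (simp add: field_simps)
qed

lemma b_small: "M * r k / 2 \<le> (1 / \<kappa>) / 16" if "r k \<le> lam 0"
proof -
  have "M * r k \<le> M * lam 0" using that M_nonneg by (rule mult_left_mono)
  then show ?thesis using Mlam0 by (simp add: field_simps)
qed

lemma lam_step:
  assumes SG: "symm (G k)" and lo: "\<And>v. qf (Jp k) v \<le> qf (G k) v"
    and hi: "\<And>v. qf (G k) v \<le> \<xi> k * \<kappa> * qf (Jp k) v"
    and xi: "\<xi> (Suc k) \<le> 3/2" and rk: "r k \<le> lam 0" and rpk: "rp k \<le> lam 0"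
  shows "exp (M * r k / 2) * lam (Suc k) \<le> q * (exp (M * rp k / 2) * lam k)"
proof -
  define a where "a = M * rp k / 2"
  define b where "b = M * r k / 2"
  define c where "c = (1 + a) * (1 + b)"
  define C where "C = \<xi> k * \<kappa> * c"
  define m where "m = max (1 - 1 / C) (c - 1)"
  define t where "t = 1 / \<kappa>"
  define Gi where "Gi = matrix_inv (G k)"
  define Ji where "Ji = matrix_inv (J k)"
  define g' where "g' = g (Suc k)"
  have a0: "0 \<le> a" using M_nonneg rp_nonneg by (simp add: a_def)
  have b0: "0 \<le> b" using M_nonneg r_nonneg by (simp add: b_def)
  have t0: "0 < t" "t \<le> 1" using kappa_ge1 by (auto simp: t_def)
  have aa: "a \<le> t / 16" using a_small[OF rpk] by (simp add: a_def t_def)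
  have bb: "b \<le> t / 16" using b_small[OF rk] by (simp add: b_def t_def)
  have c1: "1 \<le> c" using c_ge1[of k] by (simp add: c_def a_def b_def)
  have C0: "0 < C" using xi_pos[of k] kappa_ge1 c1 by (simp add: C_def)
  have CC: "C \<le> 3 / (2 * t)"
  proof -
    have "C \<le> \<xi> (Suc k) * \<kappa>" using c_le_xi1[of k] kappa_ge1
      by (simp add: C_def c_def a_def b_def mult.commute mult.left_commute mult_right_mono)
    also have "\<dots> \<le> 3/2 * \<kappa>" using xi kappa_ge1 by (simp add: mult_right_mono)
    finally show ?thesis by (simp add: t_def)
  qed
  have m0: "0 \<le> m" using c1 by (simp add: m_def)
  have PG: "pd (G k)" by (rule G_pd) (rule lo)
  have SGi: "symm Gi" unfolding Gi_def by (rule symm_inv[OF SG pd_inv[OF PG]])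
  have IJ: "invertible (J k)" by (rule pd_inv[OF J_pd])
  have Ji0: "0 \<le> qf Ji w" for w unfolding Ji_def by (rule inv_psd[OF J_sym J_pd])
  have hi': "qf Gi w \<le> (1 + m) * qf Ji w" for w
  proof -
    have "qf Gi w \<le> ((1 + M * rp k / 2) * (1 + M * r k / 2)) * qf Ji w" unfolding Gi_def Ji_def
      by (rule anti[OF J_sym SG J_pd PG JleG[OF lo]]) (use c1 in \<open>simp_all add: c_def a_def b_def\<close>)
    then have "qf Gi w \<le> c * qf Ji w" by (simp add: c_def a_def b_def)
    also have "\<dots> \<le> (1 + m) * qf Ji w" using Ji0[of w] by (intro mult_right_mono) (auto simp: m_def)
    finally show ?thesis .
  qed
  have lo': "(1 - m) * qf Ji w \<le> qf Gi w" for w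
  proof -
    have "qf Ji w \<le> (\<xi> k * \<kappa> * ((1 + M * rp k / 2) * (1 + M * r k / 2))) * qf Gi w" unfolding Gi_def Ji_def
      by (rule anti[OF SG J_sym PG J_pd GleJ[OF hi]]) (use C0 in \<open>simp_all add: C_def c_def a_def b_def\<close>)
    then have "qf Ji w \<le> C * qf Gi w" by (simp add: C_def c_def a_def b_def)
    then have "(1 / C) * qf Ji w \<le> qf Gi w" using C0 by (simp add: field_simps)
    moreover have "(1 - m) * qf Ji w \<le> (1 / C) * qf Ji w"
      using Ji0[of w] by (intro mult_right_mono) (auto simp: m_def)
    ultimately show ?thesis by linarith
  qed
  have d1: "qf (matrix_inv (hess (x (Suc k)))) g' \<le> (1 + b) * qf Ji g'"
  proof -
    have F2': "qf (J k) v \<le> (1 + b) * qf (hess (x (Suc k))) v" for v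
      using F2[of "Suc k" v] by (simp add: Jp_Suc rp_Suc b_def)
    show ?thesis unfolding Ji_def
      by (rule anti[OF J_sym Hsym J_pd H_pd F2']) (use b0 in simp)
  qed
  have d2: "Ji *v g' = (Ji - Gi) *v g k"
    by (simp add: g'_def g_Suc mv_vdiff mv_diff Ji_def Gi_def inv_mv2[OF IJ])
  have d3: "qf Ji g' = qf (J k) ((Ji - Gi) *v g k)"
    using inv_qf_eq[OF IJ, of g'] d2 by (simp add: Ji_def)
  have d4: "qf (J k) ((Ji - Gi) *v g k) \<le> m^2 * qf Ji (g k)"
    unfolding Ji_def
    by (rule contraction[OF J_sym IJ pd_psd[OF J_pd] SGi m0])
       (use lo' hi' in \<open>simp_all add: Ji_def\<close>)
  have d5: "qf Ji (g k) \<le> (1 + b) * (lam k)^2"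
  proof -
    have "qf Ji (g k) \<le> (1 + M * r k / 2) * qf (matrix_inv (hess (x k))) (g k)" unfolding Ji_def
      by (rule anti[OF Hsym J_sym H_pd J_pd F4]) (use b0 in \<open>simp add: b_def\<close>)
    then show ?thesis by (simp add: lam_sq b_def)
  qed
  have "(lam (Suc k))^2 \<le> (1 + b) * qf Ji g'"
    using d1 lam_sq(1)[of "Suc k"] by (simp add: g'_def)
  also have "\<dots> \<le> (1 + b) * (m^2 * ((1 + b) * (lam k)^2))"
  proof -
    have "qf Ji g' \<le> m^2 * ((1 + b) * (lam k)^2)"
      using d3 d4 d5 by (smt (verit) mult_left_mono zero_le_power2)
    then show ?thesis using b0 by (intro mult_left_mono) auto
  qed
  also have "\<dots> = ((1 + b) * m * lam k)^2" by (simp add: power2_eq_square)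
  finally have "(lam (Suc k))^2 \<le> ((1 + b) * m * lam k)^2" .
  moreover have "0 \<le> (1 + b) * m * lam k" using b0 m0 lam_sq(2)[of k] by simp
  ultimately have L': "lam (Suc k) \<le> (1 + b) * m * lam k" by (rule power2_le_imp_le)
  have "exp b * lam (Suc k) \<le> exp b * ((1 + b) * m * lam k)" using L' by simp
  also have "\<dots> = (exp b * (1 + b) * m) * lam k" by simp
  also have "\<dots> \<le> (1 - t / 2) * lam k"
    using num_main[OF t0 a0 aa b0 bb C0 CC m_def[unfolded c_def]] lam_sq(2)[of k]
    by (intro mult_right_mono) auto
  also have "\<dots> = q * lam k" by (simp add: q_def t_def)
  also have "\<dots> \<le> q * (exp a * lam k)"
  proof -
    have "lam k \<le> exp a * lam k" using lam_sq(2)[of k] a0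
      by (metis mult_right_mono one_le_exp_iff mult_1)
    then show ?thesis using q_bounds by (intro mult_left_mono) auto
  qed
  finally show ?thesis by (simp add: a_def b_def)
qed


lemma G_step_bounds:
  assumes SG: "symm (G k)" and lo: "\<And>v. qf (Jp k) v \<le> qf (G k) v"
    and hi: "\<And>v. qf (G k) v \<le> \<xi> k * \<kappa> * qf (Jp k) v"
  shows "symm (G (Suc k)) \<and> (\<forall>v. qf (Jp (Suc k)) v \<le> qf (G (Suc k)) v \<and>
           qf (G (Suc k)) v \<le> \<xi> (Suc k) * \<kappa> * qf (Jp (Suc k)) v)"
proof -
  define c where "c = (1 + M * rp k / 2) * (1 + M * r k / 2)"
  have GS: "G (Suc k) = SR1 (J k) (((1 + M * rp k / 2) * (1 + M * r k / 2)) *\<^sub>R G k) (x (Suc k) - x k)"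
    by (simp only: G_step rp_alt r_def J_def)
  have c1: "1 \<le> c" using c_ge1[of k] by (simp add: c_def)
  have lo'': "qf (J k) v \<le> qf (c *\<^sub>R G k) v" for v
    using JleG[OF lo, of v] by (simp add: qf_scale c_def)
  have hi'': "qf (c *\<^sub>R G k) v \<le> (\<xi> (Suc k) * \<kappa>) * qf (J k) v" for v
  proof -
    have J0: "0 \<le> qf (J k) v" using pd_psd[OF J_pd] psd_def by blast
    have k0: "0 \<le> \<kappa>" using kappa_ge1 by simp
    have "qf (c *\<^sub>R G k) v = c * qf (G k) v" by (rule qf_scale)
    also have "\<dots> \<le> c * ((\<xi> k * \<kappa> * c) * qf (J k) v)"
      using GleJ[OF hi, of v] c1 by (intro mult_left_mono) (auto simp: c_def)
    also have "\<dots> = ((\<xi> k * c^2) * \<kappa>) * qf (J k) v" by (simp add: power2_eq_square)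
    also have "\<dots> \<le> (\<xi> (Suc k) * \<kappa>) * qf (J k) v"
      using c_le_xi[of k] J0 k0 by (intro mult_right_mono) (auto simp: c_def)
    finally show ?thesis .
  qed
  have "symm (SR1 (J k) (c *\<^sub>R G k) (x (Suc k) - x k)) \<and>
    (\<forall>v. qf (J k) v \<le> qf (SR1 (J k) (c *\<^sub>R G k) (x (Suc k) - x k)) v \<and>
         qf (SR1 (J k) (c *\<^sub>R G k) (x (Suc k) - x k)) v \<le> (\<xi> (Suc k) * \<kappa>) * qf (J k) v)"
    by (rule SR1_props[OF J_sym symm_scale[OF SG] lo'' hi''])
  then show ?thesis by (simp add: GS[folded c_def] Jp_Suc)
qed

lemma rp_sum: "(\<Sum>i<n. rp i) \<le> (\<Sum>i<n. r i)"
proof (cases n)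
  case 0 then show ?thesis by simp
next
  case (Suc j)
  have "(\<Sum>i<Suc j. rp i) = rp 0 + (\<Sum>i<j. rp (Suc i))" by (rule sum.lessThan_Suc_shift)
  also have "\<dots> = (\<Sum>i<j. r i)" by (simp add: rp_Suc rp_def)
  also have "\<dots> \<le> (\<Sum>i<Suc j. r i)" using r_nonneg by simp
  finally show ?thesis using Suc by simp
qed

lemma geo: "(\<Sum>i<n. q^i) \<le> 2 * \<kappa>"
proof -
  have "(\<Sum>i<n. q^i) = (1 - q^n) / (1 - q)" using q_bounds by (simp add: sum_gp_strict)
  also have "\<dots> \<le> 1 / (1 - q)" using q_bounds by (intro divide_right_mono) auto
  also have "\<dots> = 2 * \<kappa>" using kappa_ge1 by (simp add: q_def)
  finally show ?thesis .
qed

lemma xi_bound: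
  assumes R: "\<And>i. i \<le> k \<Longrightarrow> r i \<le> q^i * lam 0"
  shows "\<xi> (Suc k) \<le> 3/2"
proof -
  have "(\<Sum>i<Suc k. rp i + r i) = (\<Sum>i<Suc k. rp i) + (\<Sum>i<Suc k. r i)" by (rule sum.distrib)
  also have "\<dots> \<le> 2 * (\<Sum>i<Suc k. r i)" using rp_sum[of "Suc k"] by simp
  also have "(\<Sum>i<Suc k. r i) \<le> (\<Sum>i<Suc k. q^i * lam 0)" using R by (intro sum_mono) auto
  also have "\<dots> = (\<Sum>i<Suc k. q^i) * lam 0" by (rule sum_distrib_right[symmetric])
  also have "\<dots> \<le> 2 * \<kappa> * lam 0" using geo[of "Suc k"] lam0_nonneg by (rule mult_right_mono)
  finally have S: "(\<Sum>i<Suc k. rp i + r i) \<le> 4 * \<kappa> * lam 0" by simp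
  have "M * (\<Sum>i<Suc k. rp i + r i) \<le> M * (4 * \<kappa> * lam 0)" using S M_nonneg by (rule mult_left_mono)
  also have "\<dots> = (4 * \<kappa>) * (M * lam 0)" by simp
  also have "\<dots> \<le> (4 * \<kappa>) * (ln (3/2) / (4 * \<kappa>))"
    using init kappa_ge1 by (intro mult_left_mono) (auto simp: lam_def \<kappa>_def)
  also have "\<dots> = ln (3/2)" using kappa_ge1 by simp
  finally have E: "M * (\<Sum>i<Suc k. rp i + r i) \<le> ln (3/2)" .
  have "exp (M * (\<Sum>i<Suc k. rp i + r i)) \<le> exp (ln (3/2::real))"
    using E by (simp only: exp_le_cancel_iff)
  then show ?thesis unfolding \<xi>_def by simp
qed

definition "P k \<longleftrightarrow> symm (G k) \<and> (\<forall>v. qf (Jp k) v \<le> qf (G k) v) \<and> (\<forall>v. qf (G k) v \<le> \<xi> k * \<kappa> * qf (Jp k) v)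
   \<and> exp (M * rp k / 2) * lam k \<le> q^k * lam 0 \<and> r k \<le> q^k * lam 0 \<and> \<xi> k \<le> 3/2"

lemma P0: "P 0"
proof -
  have SG: "symm (G 0)" by (simp add: G0 symm_scale symm_mat1)
  have lo: "qf (Jp 0) v \<le> qf (G 0) v" for v using Hhi by (simp add: Jp_def G0 qf_id)
  have hi: "qf (G 0) v \<le> \<xi> 0 * \<kappa> * qf (Jp 0) v" for v
  proof -
    have "qf (G 0) v = \<kappa> * (\<mu> * (norm v)^2)" using mu_pos by (simp add: G0 qf_id \<kappa>_def)
    also have "\<dots> \<le> \<kappa> * qf (Jp 0) v" using Hlo kappa_ge1 by (intro mult_left_mono) (auto simp: Jp_def)
    finally show ?thesis by (simp add: \<xi>_def)
  qed
  have "r 0 \<le> exp (M * rp 0 / 2) * lam 0" by (rule r_bound[OF SG lo])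
  then show ?thesis using SG lo hi by (simp add: P_def rp_def \<xi>_def)
qed

lemma P_all: "\<forall>i\<le>k. P i"
proof (induction k)
  case 0 then show ?case using P0 by simp
next
  case (Suc k)
  have Pk: "P k" using Suc by simp
  have SG: "symm (G k)" and lo: "\<And>v. qf (Jp k) v \<le> qf (G k) v"
    and hi: "\<And>v. qf (G k) v \<le> \<xi> k * \<kappa> * qf (Jp k) v"
    and la: "exp (M * rp k / 2) * lam k \<le> q^k * lam 0" and rk: "r k \<le> q^k * lam 0"
    using Pk by (auto simp: P_def)
  have qk: "q^i * lam 0 \<le> lam 0" for i
    using q_bounds lam0_nonneg by (simp add: mult_left_le_one_le power_le_one)
  have R: "r i \<le> q^i * lam 0" if "i \<le> k" for i using Suc that by (auto simp: P_def)
  have xi: "\<xi> (Suc k) \<le> 3/2" by (rule xi_bound[OF R])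
  have Gs: "symm (G (Suc k)) \<and> (\<forall>v. qf (Jp (Suc k)) v \<le> qf (G (Suc k)) v \<and>
           qf (G (Suc k)) v \<le> \<xi> (Suc k) * \<kappa> * qf (Jp (Suc k)) v)"
    by (rule G_step_bounds[OF SG lo hi])
  have rk0: "r k \<le> lam 0" using rk qk[of k] by linarith
  have rpk0: "rp k \<le> lam 0"
  proof (cases k)
    case 0 then show ?thesis using lam0_nonneg by (simp add: rp_def)
  next
    case (Suc j) then show ?thesis using R[of j] qk[of j] by (simp add: rp_def)
  qed
  have "exp (M * r k / 2) * lam (Suc k) \<le> q * (exp (M * rp k / 2) * lam k)"
    by (rule lam_step[OF SG lo hi xi rk0 rpk0])
  also have "\<dots> \<le> q * (q^k * lam 0)" using la q_bounds by (intro mult_left_mono) auto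
  finally have la': "exp (M * rp (Suc k) / 2) * lam (Suc k) \<le> q^(Suc k) * lam 0"
    by (simp add: rp_Suc mult.assoc)
  have "r (Suc k) \<le> exp (M * rp (Suc k) / 2) * lam (Suc k)"
    using Gs by (intro r_bound) auto
  then have "r (Suc k) \<le> q^(Suc k) * lam 0" using la' by linarith
  then have "P (Suc k)" using Gs la' xi by (simp add: P_def)
  then show ?case using Suc by (simp add: le_Suc_eq)
qed

lemma main:
  "\<forall>k. let \<kappa> = L / \<mu>;
             r = (\<lambda>i. loc_norm hess (x i) (x (Suc i) - x i));
             rp = (\<lambda>i. if i = 0 then 0 else r (i - 1));
             Jp = (if k = 0 then hess (x 0) else avg_hess hess (x (k - 1)) (x k - x (k - 1)));
             \<xi> = exp (M * (\<Sum>i<k. rp i + r i));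
             q = 1 - 1 / (2 * \<kappa>);
             lam0 = newton_decr grad hess (x 0)
           in loewner_le Jp (G k) \<and> loewner_le (G k) ((\<xi> * \<kappa>) *\<^sub>R Jp)
              \<and> exp (M * rp k / 2) * newton_decr grad hess (x k) \<le> q ^ k * lam0
              \<and> r k \<le> q ^ k * lam0
              \<and> \<xi> \<le> 3 / 2"
proof
  fix k
  have "P k" using P_all[of k] by simp
  then have "(\<forall>v. qf (Jp k) v \<le> qf (G k) v) \<and> (\<forall>v. qf (G k) v \<le> \<xi> k * \<kappa> * qf (Jp k) v)
   \<and> exp (M * rp k / 2) * lam k \<le> q^k * lam 0 \<and> r k \<le> q^k * lam 0 \<and> \<xi> k \<le> 3/2"
    by (simp add: P_def)
  then show "let \<kappa> = L / \<mu>;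
             r = (\<lambda>i. loc_norm hess (x i) (x (Suc i) - x i));
             rp = (\<lambda>i. if i = 0 then 0 else r (i - 1));
             Jp = (if k = 0 then hess (x 0) else avg_hess hess (x (k - 1)) (x k - x (k - 1)));
             \<xi> = exp (M * (\<Sum>i<k. rp i + r i));
             q = 1 - 1 / (2 * \<kappa>);
             lam0 = newton_decr grad hess (x 0)
           in loewner_le Jp (G k) \<and> loewner_le (G k) ((\<xi> * \<kappa>) *\<^sub>R Jp)
              \<and> exp (M * rp k / 2) * newton_decr grad hess (x k) \<le> q ^ k * lam0
              \<and> r k \<le> q ^ k * lam0
              \<and> \<xi> \<le> 3 / 2"
    unfolding Let_def loewner_qf qf_scale
    apply (fold \<kappa>_def)
    apply (fold r_def)
    apply (fold rp_def)
    apply (fold Jp_def)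
    apply (fold \<xi>_def)
    apply (fold q_def)
    apply (fold lam_def)
    apply (simp add: mult.assoc)
    done
qed

end

theorem theorem3:
  fixes f :: "real^'n \<Rightarrow> real"
    and grad :: "real^'n \<Rightarrow> real^'n"
    and hess :: "real^'n \<Rightarrow> real^'n^'n"
    and \<mu> L M :: real
    and x :: "nat \<Rightarrow> real^'n"
    and G :: "nat \<Rightarrow> real^'n^'n"
  assumes grad: "\<And>y. (f has_derivative (\<lambda>h. grad y \<bullet> h)) (at y)"
    and hess: "\<And>y. (grad has_derivative (\<lambda>h. hess y *v h)) (at y)"
    and mu_pos: "0 < \<mu>" and mu_le_L: "\<mu> \<le> L"
    and bounds: "\<And>y. loewner_le (\<mu> *\<^sub>R mat 1) (hess y) \<and> loewner_le (hess y) (L *\<^sub>R mat 1)"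
    and M_nonneg: "0 \<le> M"
    and ssc: "strongly_self_concordant hess M"
    and G0: "G 0 = L *\<^sub>R mat 1"
    and x_step: "\<And>k. x (Suc k) = x k - matrix_inv (G k) *v grad (x k)"
    and G_step: "\<And>k. G (Suc k) =
       SR1 (avg_hess hess (x k) (x (Suc k) - x k))
           (((1 + M * (if k = 0 then 0 else loc_norm hess (x (k - 1)) (x k - x (k - 1))) / 2)
             * (1 + M * loc_norm hess (x k) (x (Suc k) - x k) / 2)) *\<^sub>R G k)
           (x (Suc k) - x k)"
    and init: "M * newton_decr grad hess (x 0) \<le> ln (3/2) / (4 * (L / \<mu>))"
  shows "\<forall>k. let \<kappa> = L / \<mu>;
             r = (\<lambda>i. loc_norm hess (x i) (x (Suc i) - x i));
             rp = (\<lambda>i. if i = 0 then 0 else r (i - 1));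
             Jp = (if k = 0 then hess (x 0) else avg_hess hess (x (k - 1)) (x k - x (k - 1)));
             \<xi> = exp (M * (\<Sum>i<k. rp i + r i));
             q = 1 - 1 / (2 * \<kappa>);
             lam0 = newton_decr grad hess (x 0)
           in loewner_le Jp (G k) \<and> loewner_le (G k) ((\<xi> * \<kappa>) *\<^sub>R Jp)
              \<and> exp (M * rp k / 2) * newton_decr grad hess (x k) \<le> q ^ k * lam0
              \<and> r k \<le> q ^ k * lam0
              \<and> \<xi> \<le> 3 / 2"
  proof -
  interpret R: run f grad hess \<mu> L M x G
    by unfold_locales (rule assms)+
  show ?thesis by (rule R.main)
qed

end
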